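(* In the setting below, assume each $f_i$ is $L_i$-smooth, $B_f(x,y)\ge\frac{\mu_f}{2}\|x-y\|^2$ for all $x,y$ for some $\mu_f\ge0$, $\psi$ satisfies the $\mu_\psi$-condition, and $\eta_k\le\frac1{2n\sqrt{\bar LL^*}}$ for all $k\in[K]$. Then for any permutations and every $k\in[K]$, $$\|x_{k+1}-x_*\|^2\le\frac{\|x_*-x_1\|^2}{\prod_{s=1}^k\big(1+n\eta_s(\mu_f+2\mu_\psi)\big)}+\sum_{\ell=1}^k\frac{8n\eta_\ell^3R_\ell}{\prod_{s=\ell}^k\big(1+n\eta_s(\mu_f+2\mu_\psi)\big)},$$ where $R_\ell=\sum_{i=2}^n\frac{L_{\sigma_\ell^i}}{n}\Big\|\sum_{j=1}^{i-1}\nabla f_{\sigma_\ell^j}(x_* )\Big\|^2$.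
   Context: Setting. Let $n,d\in\mathbb N$, let $f_1,\dots,f_n:\mathbb R^d\to\mathbb R$ be convex, $f=\frac1n\sum_{i=1}^nf_i$, let $\psi:\mathbb R^d\to\mathbb R\cup\{+\infty\}$ be proper, closed and convex, and $F=f+\psi$. For a convex function $g$, $\nabla g(x)$ denotes an element of $\partial g(x)$, and $B_g(x,y)=g(x)-g(y)-\langle\nabla g(y),x-y\rangle$. The $\mu_\psi$-condition: $\mu_\psi\ge0$ and $B_\psi(x,y)\ge\frac{\mu_\psi}{2}\|x-y\|^2$ for all $x,y$ with $\partial\psi(y)\neq\emptyset$ and every choice of $\nabla\psi(y)\in\partial\psi(y)$. Assume there is $x_*\in\mathbb R^d$ with $F(x_* )=\inf_{x}F(x)\in\mathbb R$. Proximal shuffling gradient method: given $x_1\in\mathrm{dom}\,\psi$, a number of epochs $K\ge2$ and stepsizes $\eta_k>0$, for $k=1,\dots,K$: choose a permutation $\sigma_k=(\sigma_k^1,\dots,\sigma_k^n)$ of $[n]=\{1,\dots,n\}$; set $x_k^1=x_k$ and $x_k^{i+1}=x_k^i-\eta_k\nabla f_{\sigma_k^i}(x_k^i)$ for $i=1,\dots,n$; set $x_{k+1}=\arg\min_{x\in\mathbb R^d}\{n\psi(x)+\frac{1}{2\eta_k}\|x-x_k^{n+1}\|^2\}$. Smoothness: each $f_i$ is differentiable with $\|\nabla f_i(x)-\nabla f_i(y)\|\le L_i\|x-y\|$ for all $x,y$, $L_i>0$; $\bar L=\frac1n\sum_iL_i$, $L^*=\max_iL_i$. *)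

theory Defs
  imports "HOL-Analysis.Analysis"
begin

definition epigraph_ext :: "('a \<Rightarrow> ereal) \<Rightarrow> ('a \<times> real) set" where
  "epigraph_ext \<psi> = {(x, t). \<psi> x \<le> ereal t}"

definition proper_fun :: "('a \<Rightarrow> ereal) \<Rightarrow> bool" where
  "proper_fun \<psi> \<longleftrightarrow> (\<forall>x. \<psi> x \<noteq> -\<infinity>) \<and> (\<exists>x. \<psi> x \<noteq> \<infinity>)"

definition closed_fun :: "('a::topological_space \<Rightarrow> ereal) \<Rightarrow> bool" where
  "closed_fun \<psi> \<longleftrightarrow> closed (epigraph_ext \<psi>)"

definition convex_fun :: "('a::real_vector \<Rightarrow> ereal) \<Rightarrow> bool" where
  "convex_fun \<psi> \<longleftrightarrow> convex (epigraph_ext \<psi>)"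

definition subgrad :: "('a::real_inner \<Rightarrow> ereal) \<Rightarrow> 'a \<Rightarrow> 'a \<Rightarrow> bool" where
  "subgrad \<psi> y g \<longleftrightarrow> \<psi> y \<noteq> \<infinity> \<and> \<psi> y \<noteq> -\<infinity> \<and>
     (\<forall>x. \<psi> y + ereal (inner g (x - y)) \<le> \<psi> x)"

text \<open>mu_psi-condition: B_psi(x,y) \<ge> mu/2 |x-y|^2 for all x, all y with nonempty
  subdifferential and every subgradient at y.\<close>
definition mu_condition :: "('a::real_inner \<Rightarrow> ereal) \<Rightarrow> real \<Rightarrow> bool" where
  "mu_condition \<psi> \<mu> \<longleftrightarrow> \<mu> \<ge> 0 \<and>
     (\<forall>x y g. subgrad \<psi> y g \<longrightarrow>
        \<psi> y + ereal (inner g (x - y) + \<mu> / 2 * (norm (x - y))\<^sup>2) \<le> \<psi> x)"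

end

theory Submission
  imports Defs
begin

lemma seg_deriv:
  fixes \<phi> :: "'a::real_inner \<Rightarrow> real"
  assumes "\<And>z. GDERIV \<phi> z :> G z"
  shows "((\<lambda>s. \<phi> (v + s *\<^sub>R d)) has_real_derivative inner (G (v + t *\<^sub>R d)) d) (at t)"
proof -
  have 1: "((\<lambda>s. v + s *\<^sub>R d) has_derivative (\<lambda>s. s *\<^sub>R d)) (at t)"
    by (auto intro!: derivative_eq_intros)
  have 2: "(\<phi> has_derivative (\<lambda>h. inner h (G (v + t *\<^sub>R d)))) (at (v + t *\<^sub>R d))"
    using assms unfolding gderiv_def by simp
  have "((\<lambda>s. \<phi> (v + s *\<^sub>R d)) has_derivative (\<lambda>s. inner (s *\<^sub>R d) (G (v + t *\<^sub>R d)))) (at t)"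
    using has_derivative_compose[OF 1 2] by (simp add: o_def)
  then have "((\<lambda>s. \<phi> (v + s *\<^sub>R d)) has_derivative (*) (inner (G (v + t *\<^sub>R d)) d)) (at t)"
    by (rule has_derivative_eq_rhs) (auto simp: inner_commute)
  then show ?thesis by (simp add: has_field_derivative_def)
qed

lemma descent2:
  fixes \<phi> :: "'a::real_inner \<Rightarrow> real"
  assumes gd: "\<And>z. GDERIV \<phi> z :> G z"
    and lip: "\<And>u w. norm (G u - G w) \<le> L * norm (u - w)"
  shows "\<phi> (v + d) \<le> \<phi> v + inner (G v) d + L / 2 * (norm d)\<^sup>2"
    and "\<phi> (v + d) \<ge> \<phi> v + inner (G v) d - L / 2 * (norm d)\<^sup>2"
proof -
  have key: "\<bar>inner (G (v + t *\<^sub>R d)) d - inner (G v) d\<bar> \<le> L * t * (norm d)\<^sup>2" if "0 \<le> t" for t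
  proof -
    have "\<bar>inner (G (v + t *\<^sub>R d)) d - inner (G v) d\<bar> = \<bar>inner (G (v + t *\<^sub>R d) - G v) d\<bar>"
      by (simp add: inner_diff_left)
    also have "\<dots> \<le> norm (G (v + t *\<^sub>R d) - G v) * norm d" by (rule Cauchy_Schwarz_ineq2)
    also have "\<dots> \<le> (L * norm (t *\<^sub>R d)) * norm d"
      using lip[of "v + t *\<^sub>R d" v] by (simp add: mult_right_mono)
    also have "\<dots> = L * t * (norm d)\<^sup>2" using that by (simp add: power2_eq_square)
    finally show ?thesis .
  qed
  define h where "h s = \<phi> (v + s *\<^sub>R d) - \<phi> v - s * inner (G v) d - L / 2 * s^2 * (norm d)\<^sup>2" for s
  have "h 1 \<le> h 0"
  proof (rule DERIV_nonpos_imp_nonincreasing[of 0 1 h])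
    fix t :: real assume t: "0 \<le> t" "t \<le> 1"
    have "(h has_real_derivative (inner (G (v + t *\<^sub>R d)) d - inner (G v) d - L * t * (norm d)\<^sup>2)) (at t)"
      unfolding h_def
      by (rule seg_deriv[OF gd] derivative_eq_intros refl)+ (simp add: power2_eq_square algebra_simps)
    then show "\<exists>y. DERIV h t :> y \<and> y \<le> 0" using key[OF t(1)] by force
  qed simp
  then show "\<phi> (v + d) \<le> \<phi> v + inner (G v) d + L / 2 * (norm d)\<^sup>2" by (simp add: h_def)
  define h2 where "h2 s = \<phi> (v + s *\<^sub>R d) - \<phi> v - s * inner (G v) d + L / 2 * s^2 * (norm d)\<^sup>2" for s
  have "h2 0 \<le> h2 1"
  proof (rule DERIV_nonneg_imp_nondecreasing[of 0 1 h2])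
    fix t :: real assume t: "0 \<le> t" "t \<le> 1"
    have "(h2 has_real_derivative (inner (G (v + t *\<^sub>R d)) d - inner (G v) d + L * t * (norm d)\<^sup>2)) (at t)"
      unfolding h2_def
      by (rule seg_deriv[OF gd] derivative_eq_intros refl)+ (simp add: power2_eq_square algebra_simps)
    then show "\<exists>y. DERIV h2 t :> y \<and> y \<ge> 0" using key[OF t(1)] by force
  qed simp
  then show "\<phi> (v + d) \<ge> \<phi> v + inner (G v) d - L / 2 * (norm d)\<^sup>2" by (simp add: h2_def)
qed

lemma eps_le:
  fixes a b c :: real
  assumes "c \<ge> 0" and "\<And>t. 0 < t \<Longrightarrow> t \<le> 1 \<Longrightarrow> a \<le> b + c * t"
  shows "a \<le> b"
proof (rule ccontr)
  assume "\<not> a \<le> b"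
  then have ab: "a - b > 0" by simp
  define t where "t = min 1 ((a - b) / (2 * (c + 1)))"
  have t: "0 < t" "t \<le> 1" using ab assms(1) by (auto simp: t_def)
  have "c * t \<le> (c + 1) * ((a - b) / (2 * (c + 1)))"
    using assms(1) t by (intro mult_mono) (auto simp: t_def)
  also have "\<dots> = (a - b) / 2" using assms(1) by (simp add: field_simps)
  finally have "c * t \<le> (a - b) / 2" .
  moreover have "(a - b) / 2 < a - b" using ab by simp
  ultimately have "c * t < a - b" by linarith
  with assms(2)[OF t] show False by linarith
qed

lemma tangent:
  fixes \<phi> :: "'a::real_inner \<Rightarrow> real"
  assumes gd: "\<And>z. GDERIV \<phi> z :> G z"
    and lip: "\<And>u w. norm (G u - G w) \<le> L * norm (u - w)"
    and L: "L \<ge> 0"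
    and cv: "convex_on UNIV \<phi>"
  shows "\<phi> y \<ge> \<phi> x + inner (G x) (y - x)"
proof -
  have "inner (G x) (y - x) \<le> \<phi> y - \<phi> x + (L / 2 * (norm (y - x))\<^sup>2) * t"
    if t: "0 < t" "t \<le> 1" for t
  proof -
    have "\<phi> ((1 - t) *\<^sub>R x + t *\<^sub>R y) \<le> (1 - t) * \<phi> x + t * \<phi> y"
      using cv t by (intro convex_onD) auto
    moreover have "(1 - t) *\<^sub>R x + t *\<^sub>R y = x + t *\<^sub>R (y - x)" by (simp add: algebra_simps)
    moreover have "\<phi> (x + t *\<^sub>R (y - x)) \<ge> \<phi> x + inner (G x) (t *\<^sub>R (y - x)) - L / 2 * (norm (t *\<^sub>R (y - x)))\<^sup>2"
      by (rule descent2(2)[OF gd lip])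
    moreover have "(norm (t *\<^sub>R (y - x)))\<^sup>2 = t^2 * (norm (y - x))\<^sup>2"
      using t by (simp add: power_mult_distrib)
    moreover have "inner (G x) (t *\<^sub>R (y - x)) = t * inner (G x) (y - x)" by simp
    ultimately have "t * inner (G x) (y - x) - L / 2 * t^2 * (norm (y - x))\<^sup>2 \<le> t * (\<phi> y - \<phi> x)"
      by (simp only:) (simp add: right_diff_distrib left_diff_distrib)
    then have "t * (inner (G x) (y - x)) \<le> t * (\<phi> y - \<phi> x + (L / 2 * (norm (y - x))\<^sup>2) * t)"
      by (simp add: power2_eq_square algebra_simps)
    then show ?thesis using t by simp
  qed
  note prev = this
  have "inner (G x) (y - x) \<le> \<phi> y - \<phi> x"
    by (rule eps_le[OF _ prev]) (use L in simp)
  then show ?thesis by simp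
qed

lemma cocoercive:
  fixes \<phi> :: "'a::real_inner \<Rightarrow> real"
  assumes gd: "\<And>z. GDERIV \<phi> z :> G z"
    and lip: "\<And>u w. norm (G u - G w) \<le> L * norm (u - w)"
    and L: "L > 0"
    and cv: "convex_on UNIV \<phi>"
  shows "\<phi> y \<ge> \<phi> x + inner (G x) (y - x) + (norm (G y - G x))\<^sup>2 / (2 * L)"
proof -
  define w where "w = y - (1 / L) *\<^sub>R (G y - G x)"
  have a: "\<phi> w \<ge> \<phi> x + inner (G x) (w - x)" using tangent[OF gd lip _ cv] L by simp
  have b: "\<phi> (y + (w - y)) \<le> \<phi> y + inner (G y) (w - y) + L / 2 * (norm (w - y))\<^sup>2"
    by (rule descent2(1)[OF gd lip])
  have "inner (G x) (w - x) = inner (G x) (y - x) + inner (G x) (w - y)"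
    by (simp add: inner_diff_right)
  with a b have "\<phi> x + inner (G x) (y - x) \<le> \<phi> y + inner (G y - G x) (w - y) + L / 2 * (norm (w - y))\<^sup>2"
    by (simp add: inner_diff_left)
  moreover have "inner (G y - G x) (w - y) = - (norm (G y - G x))\<^sup>2 / L"
    by (simp add: w_def power2_norm_eq_inner)
  moreover have "norm (w - y) = norm (G y - G x) / L"
    using L by (simp add: w_def)
  moreover have "L / 2 * (norm (G y - G x) / L)\<^sup>2 = (norm (G y - G x))\<^sup>2 / (2 * L)"
    using L by (simp add: power2_eq_square field_simps)
  ultimately show ?thesis by (simp add: field_simps)
qed

lemma norm_add_sq: "(norm (a + b))\<^sup>2 = (norm a)\<^sup>2 + 2 * inner a b + (norm (b::'a::real_inner))\<^sup>2"
  using dot_norm[of a b] by simp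

lemma psi_conv:
  assumes cv: "convex_fun \<psi>" and a: "\<psi> a = ereal A" and b: "\<psi> b = ereal B"
    and t: "0 \<le> t" "t \<le> 1"
  shows "\<psi> ((1 - t) *\<^sub>R a + t *\<^sub>R b) \<le> ereal ((1 - t) * A + t * B)"
proof -
  have "(a, A) \<in> epigraph_ext \<psi>" "(b, B) \<in> epigraph_ext \<psi>"
    using a b by (auto simp: epigraph_ext_def)
  then have "(1 - t) *\<^sub>R (a, A) + t *\<^sub>R (b, B) \<in> epigraph_ext \<psi>"
    using cv t unfolding convex_fun_def by (intro convexD) auto
  then show ?thesis by (simp add: epigraph_ext_def)
qed

lemma proper_finite:
  assumes "proper_fun \<psi>" "\<psi> x \<noteq> \<infinity>"
  shows "\<psi> x = ereal (real_of_ereal (\<psi> x))"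
  using assms by (cases "\<psi> x") (auto simp: proper_fun_def)

lemma prox_subgrad:
  fixes \<psi> :: "'a::real_inner \<Rightarrow> ereal"
  assumes pr: "proper_fun \<psi>" and cv: "convex_fun \<psi>" and N: "N > 0" and e: "\<eta> > 0"
    and pm: "\<And>z. ereal N * \<psi> p + ereal (1 / (2 * \<eta>) * (norm (p - y))\<^sup>2)
                 \<le> ereal N * \<psi> z + ereal (1 / (2 * \<eta>) * (norm (z - y))\<^sup>2)"
  shows "subgrad \<psi> p ((1 / (N * \<eta>)) *\<^sub>R (y - p))"
proof -
  obtain z0 where z0: "\<psi> z0 \<noteq> \<infinity>" using pr by (auto simp: proper_fun_def)
  then obtain Z0 where Z0: "\<psi> z0 = ereal Z0" using pr by (cases "\<psi> z0") (auto simp: proper_fun_def)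
  have pinf: "\<psi> p \<noteq> \<infinity>"
  proof
    assume "\<psi> p = \<infinity>"
    with pm[of z0] Z0 N show False by simp
  qed
  then obtain P where P: "\<psi> p = ereal P" using pr by (cases "\<psi> p") (auto simp: proper_fun_def)
  have "\<psi> p + ereal (inner ((1 / (N * \<eta>)) *\<^sub>R (y - p)) (z - p)) \<le> \<psi> z" for z
  proof (cases "\<psi> z = \<infinity>")
    case True then show ?thesis by simp
  next
    case False
    then obtain Z where Z: "\<psi> z = ereal Z" using pr by (cases "\<psi> z") (auto simp: proper_fun_def)
    have "N * (P - Z) \<le> (1 / \<eta>) * inner (p - y) (z - p) + ((norm (z - p))\<^sup>2 / (2 * \<eta>)) * t"
      if t: "0 < t" "t \<le> 1" for t
    proof -
      define zt where "zt = (1 - t) *\<^sub>R p + t *\<^sub>R z"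
      have c: "\<psi> zt \<le> ereal ((1 - t) * P + t * Z)" unfolding zt_def
        using psi_conv[OF cv P Z] t by simp
      then have "\<psi> zt \<noteq> \<infinity>" by auto
      then obtain Q where Q: "\<psi> zt = ereal Q" using pr by (cases "\<psi> zt") (auto simp: proper_fun_def)
      have Qle: "Q \<le> (1 - t) * P + t * Z" using c Q by simp
      have "N * P + 1 / (2 * \<eta>) * (norm (p - y))\<^sup>2 \<le> N * Q + 1 / (2 * \<eta>) * (norm (zt - y))\<^sup>2"
        using pm[of zt] P Q by simp
      moreover have zeq: "zt - y = (p - y) + t *\<^sub>R (z - p)" by (simp add: zt_def algebra_simps)
      have "(norm (zt - y))\<^sup>2 = (norm (p - y))\<^sup>2 + 2 * t * inner (p - y) (z - p) + t^2 * (norm (z - p))\<^sup>2"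
        unfolding zeq norm_add_sq using t by (simp add: power_mult_distrib)
      moreover have "N * Q \<le> N * ((1 - t) * P + t * Z)" using Qle N by simp
      ultimately have "N * t * (P - Z) \<le> 1 / (2 * \<eta>) * (2 * t * inner (p - y) (z - p) + t^2 * (norm (z - p))\<^sup>2)"
        by (simp add: algebra_simps)
      also have "\<dots> = t * ((1 / \<eta>) * inner (p - y) (z - p) + ((norm (z - p))\<^sup>2 / (2 * \<eta>)) * t)"
        using e by (simp add: power2_eq_square field_simps)
      finally show ?thesis using t by (simp add: mult.assoc)
    qed
    note prev = this
    have "N * (P - Z) \<le> (1 / \<eta>) * inner (p - y) (z - p)"
      by (rule eps_le[OF _ prev]) (use e in simp)
    then have "N * (P - Z) * \<eta> \<le> inner (p - y) (z - p)"
      using e by (simp add: field_simps)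
    then have "(P - Z) \<le> inner (p - y) (z - p) / (N * \<eta>)"
      using N e by (simp add: pos_le_divide_eq mult_ac)
    moreover have "inner ((1 / (N * \<eta>)) *\<^sub>R (y - p)) (z - p) = - (inner (p - y) (z - p) / (N * \<eta>))"
    proof -
      have "y - p = - (p - y)" by simp
      then show ?thesis by (simp only: inner_scaleR_left inner_minus_left) simp
    qed
    ultimately have "P + inner ((1 / (N * \<eta>)) *\<^sub>R (y - p)) (z - p) \<le> Z" by linarith
    then show ?thesis using P Z by simp
  qed
  then show ?thesis using P by (simp add: subgrad_def)
qed

lemma opt_subgrad:
  fixes \<psi> :: "'a::real_inner \<Rightarrow> ereal"
  assumes pr: "proper_fun \<psi>" and cv: "convex_fun \<psi>" and fin: "\<psi> xs \<noteq> \<infinity>"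
    and mn: "\<And>u. ereal (F0 xs) + \<psi> xs \<le> ereal (F0 u) + \<psi> u"
    and ds: "\<And>d. F0 (xs + d) \<le> F0 xs + inner g0 d + M * (norm d)\<^sup>2" and M: "M \<ge> 0"
  shows "subgrad \<psi> xs (- g0)"
proof -
  obtain P where P: "\<psi> xs = ereal P" using pr fin by (cases "\<psi> xs") (auto simp: proper_fun_def)
  have "\<psi> xs + ereal (inner (- g0) (z - xs)) \<le> \<psi> z" for z
  proof (cases "\<psi> z = \<infinity>")
    case True then show ?thesis by simp
  next
    case False
    then obtain Z where Z: "\<psi> z = ereal Z" using pr by (cases "\<psi> z") (auto simp: proper_fun_def)
    have "P - Z \<le> inner g0 (z - xs) + (M * (norm (z - xs))\<^sup>2) * t" if t: "0 < t" "t \<le> 1" for t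
    proof -
      define zt where "zt = (1 - t) *\<^sub>R xs + t *\<^sub>R z"
      have c: "\<psi> zt \<le> ereal ((1 - t) * P + t * Z)" unfolding zt_def
        using psi_conv[OF cv P Z] t by simp
      then have "\<psi> zt \<noteq> \<infinity>" by auto
      then obtain Q where Q: "\<psi> zt = ereal Q" using pr by (cases "\<psi> zt") (auto simp: proper_fun_def)
      have Qle: "Q \<le> (1 - t) * P + t * Z" using c Q by simp
      have "F0 xs + P \<le> F0 zt + Q" using mn[of zt] P Q by simp
      moreover have "zt = xs + t *\<^sub>R (z - xs)" by (simp add: zt_def algebra_simps)
      then have "F0 zt \<le> F0 xs + t * inner g0 (z - xs) + M * (t^2 * (norm (z - xs))\<^sup>2)"
        using ds[of "t *\<^sub>R (z - xs)"] t by (simp add: power_mult_distrib)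
      ultimately have "t * (P - Z) \<le> t * (inner g0 (z - xs) + (M * (norm (z - xs))\<^sup>2) * t)"
        using Qle by (simp add: power2_eq_square algebra_simps)
      then show ?thesis using t by simp
    qed
    note prev = this
    have "P - Z \<le> inner g0 (z - xs)"
      by (rule eps_le[OF _ prev]) (use M in simp)
    then show ?thesis using P Z by (simp add: inner_diff_right)
  qed
  then show ?thesis using P by (simp add: subgrad_def)
qed


lemma norm_sum_sq: "(norm (\<Sum>j\<in>I. v j))\<^sup>2 \<le> real (card I) * (\<Sum>j\<in>I. (norm (v j))\<^sup>2)"
proof -
  have "(norm (\<Sum>j\<in>I. v j))\<^sup>2 \<le> (\<Sum>j\<in>I. norm (v j))\<^sup>2"
    by (rule power_mono[OF norm_sum norm_ge_zero])
  also have "\<dots> \<le> (\<Sum>j\<in>I. (norm (v j))\<^sup>2) * card I" by (rule sum_squared_le_sum_of_squares)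
  finally show ?thesis by (simp only: mult.commute)
qed

lemma sq_add_le: "(norm (a + b))\<^sup>2 \<le> 2 * (norm a)\<^sup>2 + 2 * (norm (b::'a::real_inner))\<^sup>2"
proof -
  have "0 \<le> (norm (a - b))\<^sup>2" by simp
  also have "(norm (a - b))\<^sup>2 = (norm a)\<^sup>2 - 2 * inner a b + (norm b)\<^sup>2"
    using norm_add_sq[of a "- b"] by simp
  finally show ?thesis unfolding norm_add_sq by linarith
qed


lemma epoch:
  fixes f :: "nat \<Rightarrow> 'a::real_inner \<Rightarrow> real" and gf :: "nat \<Rightarrow> 'a \<Rightarrow> 'a"
    and \<psi> :: "'a \<Rightarrow> ereal" and L :: "nat \<Rightarrow> real" and p :: "nat \<Rightarrow> 'a"
  assumes n: "n \<ge> 1"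
    and conv_f: "\<And>i. i \<in> {1..n} \<Longrightarrow> convex_on UNIV (f i)"
    and grad_f: "\<And>i z. i \<in> {1..n} \<Longrightarrow> GDERIV (f i) z :> gf i z"
    and L_pos: "\<And>i. i \<in> {1..n} \<Longrightarrow> L i > 0"
    and smooth: "\<And>i u v. i \<in> {1..n} \<Longrightarrow> norm (gf i u - gf i v) \<le> L i * norm (u - v)"
    and pr: "proper_fun \<psi>" and cv: "convex_fun \<psi>"
    and f_strong: "\<And>u v. (\<Sum>i=1..n. f i u) / n - (\<Sum>i=1..n. f i v) / n
                     - inner ((\<Sum>i=1..n. gf i v) /\<^sub>R real n) (u - v)
                     \<ge> \<mu>f / 2 * (norm (u - v))\<^sup>2"
    and mu_psi: "mu_condition \<psi> \<mu>\<psi>"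
    and sgs: "subgrad \<psi> xs (- ((\<Sum>i=1..n. gf i xs) /\<^sub>R real n))"
    and e: "\<eta> > 0"
    and hA: "2 * \<eta> * (\<Sum>i=1..n. L i) \<le> 1"
    and hB: "4 * \<eta>^2 * n * Lm * (\<Sum>i=1..n. L i) \<le> 1"
    and Lm: "\<And>i. i \<in> {1..n} \<Longrightarrow> L i \<le> Lm"
    and perm: "\<sigma> permutes {1..n}"
    and p1: "p 1 = xk"
    and pstep: "\<And>i. i \<in> {1..n} \<Longrightarrow> p (i + 1) = p i - \<eta> *\<^sub>R gf (\<sigma> i) (p i)"
    and prox: "\<And>z. ereal (real n) * \<psi> xp + ereal (1 / (2 * \<eta>) * (norm (xp - p (n + 1)))\<^sup>2)
        \<le> ereal (real n) * \<psi> z + ereal (1 / (2 * \<eta>) * (norm (z - p (n + 1)))\<^sup>2)"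
  shows "(1 + n * \<eta> * (\<mu>f + 2 * \<mu>\<psi>)) * (norm (xp - xs))\<^sup>2 \<le> (norm (xk - xs))\<^sup>2
     + 8 * n * \<eta> ^ 3 * (\<Sum>i=2..n. L (\<sigma> i) / n * (norm (\<Sum>j=1..i-1. gf (\<sigma> j) xs))\<^sup>2)"
proof -
  define N where "N = real n"
  have N: "N > 0" using n by (simp add: N_def)
  have sig: "\<sigma> i \<in> {1..n}" if "i \<in> {1..n}" for i using permutes_in_image[OF perm] that by blast
  define g where "g i = gf (\<sigma> i) (p i)" for i
  define h where "h i = gf (\<sigma> i) xs" for i
  define B where "B i = (norm (h i - g i))\<^sup>2 / (2 * L (\<sigma> i))" for i
  define D where "D i = (\<Sum>j\<in>{1..<i}. g j)" for i
  define Ds where "Ds i = (\<Sum>j\<in>{1..<i}. h j)" for i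
  define y where "y = p (n + 1)"
  define S where "S = (\<Sum>i=1..n. g i)"
  define gb where "gb = (\<Sum>i=1..n. gf i xs) /\<^sub>R N"
  define E where "E = (norm (xp - xs))\<^sup>2"
  have pD: "p i = xk - \<eta> *\<^sub>R D i" if "1 \<le> i" "i \<le> n + 1" for i
    using that
  proof (induction i rule: dec_induct)
    case base have "D 1 = 0" by (simp add: D_def)
    then show ?case using p1 by simp
  next
    case (step i)
    then have "p (Suc i) = p i - \<eta> *\<^sub>R g i" using pstep[of i] by (simp add: g_def)
    also have "\<dots> = xk - \<eta> *\<^sub>R D (Suc i)"
      using step by (simp add: D_def scaleR_add_right algebra_simps)
    finally show ?case .
  qed
  have yS: "y = xk - \<eta> *\<^sub>R S"
    using pD[of "n+1"] n by (simp add: y_def S_def D_def atLeastLessThanSuc_atLeastAtMost)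
  have Bnn: "B i \<ge> 0" if "i \<in> {1..n}" for i using L_pos[OF sig[OF that]] by (simp add: B_def)
  have F1: "inner (g i) (xp - xs) \<ge> f (\<sigma> i) xp - f (\<sigma> i) xs - L (\<sigma> i) / 2 * (norm (xp - p i))\<^sup>2 + B i"
    if i: "i \<in> {1..n}" for i
  proof -
    have gd: "\<And>z. GDERIV (f (\<sigma> i)) z :> gf (\<sigma> i) z" using grad_f sig[OF i] by blast
    have lp: "\<And>u w. norm (gf (\<sigma> i) u - gf (\<sigma> i) w) \<le> L (\<sigma> i) * norm (u - w)" using smooth sig[OF i] by blast
    have a: "f (\<sigma> i) (p i + (xp - p i)) \<le> f (\<sigma> i) (p i) + inner (g i) (xp - p i) + L (\<sigma> i) / 2 * (norm (xp - p i))\<^sup>2"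
      unfolding g_def by (rule descent2(1)[OF gd lp])
    have b: "f (\<sigma> i) xs \<ge> f (\<sigma> i) (p i) + inner (g i) (xs - p i) + (norm (h i - g i))\<^sup>2 / (2 * L (\<sigma> i))"
      unfolding g_def h_def by (rule cocoercive[OF gd lp L_pos[OF sig[OF i]] conv_f[OF sig[OF i]]])
    have "inner (g i) (xp - p i) - inner (g i) (xs - p i) = inner (g i) (xp - xs)"
      by (simp add: inner_diff_right)
    then show ?thesis using a b by (simp add: B_def)
  qed
  have reidx: "(\<Sum>i=1..n. F (\<sigma> i)) = (\<Sum>i=1..n. F i)" for F :: "nat \<Rightarrow> real"
    using sum.permute[OF perm, of F] by (simp add: o_def)
  define Q where "Q = (\<Sum>i=1..n. L (\<sigma> i) / 2 * (norm (xp - p i))\<^sup>2)"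
  define SB where "SB = (\<Sum>i=1..n. B i)"
  define Fp where "Fp = (\<Sum>i=1..n. f i xp)"
  define Fs where "Fs = (\<Sum>i=1..n. f i xs)"
  have F2: "inner S (xp - xs) \<ge> Fp - Fs - Q + SB"
  proof -
    have "(\<Sum>i=1..n. f (\<sigma> i) xp - f (\<sigma> i) xs - L (\<sigma> i) / 2 * (norm (xp - p i))\<^sup>2 + B i)
        \<le> (\<Sum>i=1..n. inner (g i) (xp - xs))"
      by (rule sum_mono) (rule F1)
    also have "\<dots> = inner S (xp - xs)" by (simp add: S_def inner_sum_left)
    finally show ?thesis
      using reidx[of "\<lambda>i. f i xp"] reidx[of "\<lambda>i. f i xs"]
      by (simp add: sum.distrib sum_subtractf Q_def SB_def Fp_def Fs_def)
  qed
  define I3 where "I3 = inner gb (xp - xs)"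
  have F3: "Fp / N - Fs / N - I3 \<ge> \<mu>f / 2 * E"
    using f_strong[of xp xs] by (simp add: Fp_def Fs_def I3_def gb_def E_def N_def)
  define g\<psi> where "g\<psi> = (1 / (N * \<eta>)) *\<^sub>R (y - xp)"
  have sgp: "subgrad \<psi> xp g\<psi>" unfolding g\<psi>_def
    by (rule prox_subgrad[OF pr cv N e]) (use prox in \<open>simp add: N_def y_def\<close>)
  obtain Pp where Pp: "\<psi> xp = ereal Pp" using sgp by (cases "\<psi> xp") (auto simp: subgrad_def)
  obtain Ps where Ps: "\<psi> xs = ereal Ps" using sgs by (cases "\<psi> xs") (auto simp: subgrad_def)
  have mu: "\<mu>\<psi> \<ge> 0" using mu_psi by (simp add: mu_condition_def)
  define I2 where "I2 = inner g\<psi> (xs - xp)"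
  have F4: "Pp + I2 + \<mu>\<psi> / 2 * E \<le> Ps"
  proof -
    have "\<psi> xp + ereal (inner g\<psi> (xs - xp) + \<mu>\<psi> / 2 * (norm (xs - xp))\<^sup>2) \<le> \<psi> xs"
      using mu_psi sgp unfolding mu_condition_def by blast
    then show ?thesis using Pp Ps by (simp add: I2_def E_def norm_minus_commute)
  qed
  have F5: "Ps - I3 + \<mu>\<psi> / 2 * E \<le> Pp"
  proof -
    have "\<psi> xs + ereal (inner (- ((\<Sum>i=1..n. gf i xs) /\<^sub>R real n)) (xp - xs) + \<mu>\<psi> / 2 * (norm (xp - xs))\<^sup>2) \<le> \<psi> xp"
      using mu_psi sgs unfolding mu_condition_def by blast
    then show ?thesis using Pp Ps by (simp add: I3_def E_def gb_def N_def)
  qed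
  define K where "K = (norm (xk - xp))\<^sup>2"
  define I1 where "I1 = inner S (xp - xs)"
  have F6: "(norm (xk - xs))\<^sup>2 = K + 2 * (\<eta> * I1 - N * \<eta> * I2) + E"
  proof -
    have yx: "y - xp = (N * \<eta>) *\<^sub>R g\<psi>" using N e by (simp add: g\<psi>_def)
    have xe: "xk - xp = \<eta> *\<^sub>R S + (y - xp)" using yS by simp
    have "inner (xk - xp) (xp - xs) = \<eta> * I1 - N * \<eta> * I2"
    proof -
      have m: "xp - xs = - (xs - xp)" by simp
      have "inner g\<psi> (xp - xs) = - I2" unfolding I2_def by (subst m) (rule inner_minus_right)
      then show ?thesis unfolding xe yx I1_def by (simp add: inner_add_left)
    qed
    moreover have "(norm (xk - xs))\<^sup>2 = (norm ((xk - xp) + (xp - xs)))\<^sup>2" by simp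
    ultimately show ?thesis unfolding K_def E_def norm_add_sq by simp
  qed
  have X1: "\<eta> * I1 \<ge> \<eta> * Fp - \<eta> * Fs - \<eta> * Q + \<eta> * SB"
    using mult_left_mono[OF F2, of \<eta>] e by (simp add: I1_def algebra_simps)
  have X2: "\<eta> * Fp - \<eta> * Fs - N * \<eta> * I3 \<ge> N * \<eta> * \<mu>f / 2 * E"
    using mult_left_mono[OF F3, of "N * \<eta>"] e N by (simp add: algebra_simps)
  have X3: "N * \<eta> * Pp + N * \<eta> * I2 + N * \<eta> * \<mu>\<psi> / 2 * E \<le> N * \<eta> * Ps"
    using mult_left_mono[OF F4, of "N * \<eta>"] e N by (simp add: algebra_simps)
  have X4: "N * \<eta> * Ps - N * \<eta> * I3 + N * \<eta> * \<mu>\<psi> / 2 * E \<le> N * \<eta> * Pp"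
    using mult_left_mono[OF F5, of "N * \<eta>"] e N by (simp add: algebra_simps)
  have R1: "E \<le> (norm (xk - xs))\<^sup>2 - K - N * \<eta> * (\<mu>f + 2 * \<mu>\<psi>) * E + 2 * \<eta> * Q - 2 * \<eta> * SB"
    using F6 X1 X2 X3 X4 by (simp add: algebra_simps)
  have Lsum: "(\<Sum>i=1..n. L (\<sigma> i)) = (\<Sum>i=1..n. L i)" by (rule reidx)
  have Lsig: "0 < L (\<sigma> i)" "L (\<sigma> i) \<le> Lm" if "i \<in> {1..n}" for i
    using L_pos[OF sig[OF that]] Lm[OF sig[OF that]] by auto
  define Z0 where "Z0 = 2 * N * Lm * SB"
  have SBnn: "SB \<ge> 0" unfolding SB_def by (rule sum_nonneg) (use Bnn in auto)
  have DZ: "(norm (D i - Ds i))\<^sup>2 \<le> Z0" if i: "i \<in> {1..n}" for i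
  proof -
    have "D i - Ds i = (\<Sum>j\<in>{1..<i}. g j - h j)" by (simp add: D_def Ds_def sum_subtractf)
    then have "(norm (D i - Ds i))\<^sup>2 \<le> real (card {1..<i}) * (\<Sum>j\<in>{1..<i}. (norm (g j - h j))\<^sup>2)"
      using norm_sum_sq by metis
    also have "\<dots> \<le> N * (\<Sum>j=1..n. (norm (g j - h j))\<^sup>2)"
    proof (rule mult_mono)
      show "real (card {1..<i}) \<le> N" using i by (simp add: N_def)
      show "(\<Sum>j\<in>{1..<i}. (norm (g j - h j))\<^sup>2) \<le> (\<Sum>j=1..n. (norm (g j - h j))\<^sup>2)"
        by (rule sum_mono2) (use i in auto)
    qed (use N in \<open>auto intro: sum_nonneg\<close>)
    also have "(\<Sum>j=1..n. (norm (g j - h j))\<^sup>2) \<le> (\<Sum>j=1..n. 2 * Lm * B j)"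
    proof (rule sum_mono)
      fix j assume j: "j \<in> {1..n}"
      have "(norm (g j - h j))\<^sup>2 = 2 * L (\<sigma> j) * B j"
        using Lsig[OF j] by (simp add: B_def norm_minus_commute)
      also have "\<dots> \<le> 2 * Lm * B j" using Lsig[OF j] Bnn[OF j] by (simp add: mult_right_mono)
      finally show "(norm (g j - h j))\<^sup>2 \<le> 2 * Lm * B j" .
    qed
    then have "N * (\<Sum>j=1..n. (norm (g j - h j))\<^sup>2) \<le> N * (\<Sum>j=1..n. 2 * Lm * B j)"
      using N by simp
    finally show ?thesis by (simp add: Z0_def SB_def sum_distrib_left mult_ac)
  qed
  have Q2: "(norm (xp - p i))\<^sup>2 \<le> 2 * K + 2 * \<eta>^2 * (2 * Z0 + 2 * (norm (Ds i))\<^sup>2)"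
    if i: "i \<in> {1..n}" for i
  proof -
    have "xp - p i = (xp - xk) + \<eta> *\<^sub>R D i" using pD[of i] i by simp
    then have "(norm (xp - p i))\<^sup>2 \<le> 2 * (norm (xp - xk))\<^sup>2 + 2 * (norm (\<eta> *\<^sub>R D i))\<^sup>2"
      using sq_add_le by metis
    moreover have "(norm (\<eta> *\<^sub>R D i))\<^sup>2 = \<eta>^2 * (norm (D i))\<^sup>2" using e by (simp add: power_mult_distrib)
    moreover have "(norm (D i))\<^sup>2 \<le> 2 * (norm (D i - Ds i))\<^sup>2 + 2 * (norm (Ds i))\<^sup>2"
      using sq_add_le[of "D i - Ds i" "Ds i"] by simp
    moreover have "(norm (xp - xk))\<^sup>2 = K" by (simp add: K_def norm_minus_commute)
    ultimately have "(norm (xp - p i))\<^sup>2 \<le> 2 * K + 2 * (\<eta>^2 * (2 * (norm (D i - Ds i))\<^sup>2 + 2 * (norm (Ds i))\<^sup>2))"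
      using e by (smt (verit) mult_left_mono zero_le_power2)
    also have "\<dots> \<le> 2 * K + 2 * (\<eta>^2 * (2 * Z0 + 2 * (norm (Ds i))\<^sup>2))"
      using DZ[OF i] by (simp add: mult_left_mono)
    finally show ?thesis by simp
  qed
  define RR where "RR = (\<Sum>i=1..n. L (\<sigma> i) * (norm (Ds i))\<^sup>2)"
  define SL where "SL = (\<Sum>i=1..n. L i)"
  have Qb: "2 * Q \<le> 2 * K * SL + 4 * \<eta>^2 * Z0 * SL + 4 * \<eta>^2 * RR"
  proof -
    have "2 * Q = (\<Sum>i=1..n. L (\<sigma> i) * (norm (xp - p i))\<^sup>2)"
      by (simp add: Q_def sum_distrib_left)
    also have "\<dots> \<le> (\<Sum>i=1..n. L (\<sigma> i) * (2 * K + 2 * \<eta>^2 * (2 * Z0 + 2 * (norm (Ds i))\<^sup>2)))"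
      by (rule sum_mono) (use Q2 Lsig in \<open>simp add: mult_left_mono\<close>)
    also have "\<dots> = 2 * K * (\<Sum>i=1..n. L (\<sigma> i)) + 4 * \<eta>^2 * Z0 * (\<Sum>i=1..n. L (\<sigma> i)) + 4 * \<eta>^2 * RR"
      by (simp add: RR_def algebra_simps sum.distrib sum_distrib_left sum_distrib_right)
    finally show ?thesis by (simp only: Lsum SL_def)
  qed
  have RRe: "RR = N * (\<Sum>i=2..n. L (\<sigma> i) / n * (norm (\<Sum>j=1..i-1. gf (\<sigma> j) xs))\<^sup>2)"
  proof -
    have "RR = (\<Sum>i=2..n. L (\<sigma> i) * (norm (Ds i))\<^sup>2)"
    proof -
      have "{1..n} = insert 1 {2..n}" using n by auto
      then show ?thesis by (simp add: RR_def Ds_def)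
    qed
    also have "\<dots> = (\<Sum>i=2..n. L (\<sigma> i) * (norm (\<Sum>j=1..i-1. gf (\<sigma> j) xs))\<^sup>2)"
    proof (rule sum.cong)
      fix i assume "i \<in> {2..n}"
      then have "{1..<i} = {1..i-1}" by auto
      then show "L (\<sigma> i) * (norm (Ds i))\<^sup>2 = L (\<sigma> i) * (norm (\<Sum>j=1..i-1. gf (\<sigma> j) xs))\<^sup>2"
        by (simp add: Ds_def h_def)
    qed simp
    finally show ?thesis using N by (simp add: sum_distrib_left N_def)
  qed
  have RRnn: "RR \<ge> 0" unfolding RR_def by (rule sum_nonneg) (use Lsig in \<open>fastforce intro: mult_nonneg_nonneg less_imp_le\<close>)
  have hA': "2 * \<eta> * SL \<le> 1" using hA by (simp add: SL_def)
  have hB': "4 * \<eta>^2 * N * Lm * SL \<le> 1" using hB by (simp add: SL_def N_def)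
  have Knn: "K \<ge> 0" by (simp add: K_def)
  have c1: "\<eta> * (2 * K * SL) \<le> K" using mult_right_mono[OF hA' Knn] by (simp add: mult_ac)
  have c2: "\<eta> * (4 * \<eta>^2 * Z0 * SL) \<le> 2 * \<eta> * SB"
  proof -
    have "\<eta> * (4 * \<eta>^2 * Z0 * SL) = (2 * \<eta> * SB) * (4 * \<eta>^2 * N * Lm * SL)"
      by (simp add: Z0_def power2_eq_square mult_ac)
    also have "\<dots> \<le> (2 * \<eta> * SB) * 1" using hB' SBnn e by (intro mult_left_mono) auto
    finally show ?thesis by simp
  qed
  have c3: "2 * \<eta> * Q \<le> \<eta> * (2 * K * SL) + \<eta> * (4 * \<eta>^2 * Z0 * SL) + 4 * \<eta>^3 * RR"
    using mult_left_mono[OF Qb, of \<eta>] e by (simp add: algebra_simps power2_eq_square power3_eq_cube)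
  have fin: "(1 + N * \<eta> * (\<mu>f + 2 * \<mu>\<psi>)) * E \<le> (norm (xk - xs))\<^sup>2 + 4 * \<eta>^3 * RR"
    using R1 c1 c2 c3 by (simp add: algebra_simps)
  have "4 * \<eta>^3 * RR \<le> 8 * \<eta>^3 * RR" using RRnn e by simp
  with fin show ?thesis by (simp add: RRe E_def N_def mult_ac)
qed


lemma unroll:
  fixes a c q :: "nat \<Rightarrow> real"
  assumes step: "\<And>k. 1 \<le> k \<Longrightarrow> k \<le> K \<Longrightarrow> q k * a (k + 1) \<le> a k + c k"
    and qpos: "\<And>k. 1 \<le> k \<Longrightarrow> k \<le> K \<Longrightarrow> q k > 0"
    and k: "1 \<le> k" "k \<le> K"
  shows "a (k + 1) \<le> a 1 / (\<Prod>s=1..k. q s) + (\<Sum>l=1..k. c l / (\<Prod>s=l..k. q s))"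
  using k
proof (induction k rule: dec_induct)
  case base
  have "q 1 * a (1 + 1) \<le> a 1 + c 1" using step[of 1] base by blast
  then show ?case using qpos[of 1] base by (simp add: field_simps)
next
  case (step k)
  have qk: "q (Suc k) > 0" using qpos step by simp
  have pp: "(\<Prod>s=l..Suc k. q s) = (\<Prod>s=l..k. q s) * q (Suc k)" if "l \<le> Suc k" for l
    using that by (simp add: prod.cl_ivl_Suc)
  have A: "a (k + 1) \<le> a 1 / (\<Prod>s=1..k. q s) + (\<Sum>l=1..k. c l / (\<Prod>s=l..k. q s))"
    using step by simp
  have "q (Suc k) * a (Suc k + 1) \<le> a (Suc k) + c (Suc k)" using step.prems step.hyps assms(1)[of "Suc k"] by simp
  then have "a (Suc k + 1) \<le> (a (Suc k) + c (Suc k)) / q (Suc k)" using qk by (simp add: field_simps)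
  also have "\<dots> \<le> (a 1 / (\<Prod>s=1..k. q s) + (\<Sum>l=1..k. c l / (\<Prod>s=l..k. q s)) + c (Suc k)) / q (Suc k)"
    using A qk by (intro divide_right_mono) auto
  also have "\<dots> = a 1 / (\<Prod>s=1..Suc k. q s) + (\<Sum>l=1..Suc k. c l / (\<Prod>s=l..Suc k. q s))"
  proof -
    have "(\<Sum>l=1..Suc k. c l / (\<Prod>s=l..Suc k. q s)) = (\<Sum>l=1..k. c l / (\<Prod>s=l..Suc k. q s)) + c (Suc k) / q (Suc k)"
      by (simp add: sum.cl_ivl_Suc)
    also have "(\<Sum>l=1..k. c l / (\<Prod>s=l..Suc k. q s)) = (\<Sum>l=1..k. c l / (\<Prod>s=l..k. q s)) / q (Suc k)"
      by (simp add: pp sum_divide_distrib)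
    finally show ?thesis using pp[of 1] by (simp add: add_divide_distrib)
  qed
  finally show ?case by simp
qed

theorem mainTheorem10:
  fixes n K :: nat
    and f :: "nat \<Rightarrow> 'a::euclidean_space \<Rightarrow> real"
    and gf :: "nat \<Rightarrow> 'a \<Rightarrow> 'a"
    and \<psi> :: "'a \<Rightarrow> ereal"
    and L :: "nat \<Rightarrow> real"
    and \<mu>f \<mu>\<psi> :: real
    and xs :: 'a
    and x :: "nat \<Rightarrow> 'a"
    and xin :: "nat \<Rightarrow> nat \<Rightarrow> 'a"
    and \<eta> :: "nat \<Rightarrow> real"
    and \<sigma> :: "nat \<Rightarrow> nat \<Rightarrow> nat"
  assumes n_pos: "n \<ge> 1"
    and conv_f: "\<And>i. i \<in> {1..n} \<Longrightarrow> convex_on UNIV (f i)"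
    and grad_f: "\<And>i z. i \<in> {1..n} \<Longrightarrow> GDERIV (f i) z :> gf i z"
    and L_pos: "\<And>i. i \<in> {1..n} \<Longrightarrow> L i > 0"
    and smooth: "\<And>i u v. i \<in> {1..n} \<Longrightarrow> norm (gf i u - gf i v) \<le> L i * norm (u - v)"
    and psi_proper: "proper_fun \<psi>"
    and psi_closed: "closed_fun \<psi>"
    and psi_convex: "convex_fun \<psi>"
    and mu_f: "\<mu>f \<ge> 0"
    and f_strong: "\<And>u v. (\<Sum>i=1..n. f i u) / n - (\<Sum>i=1..n. f i v) / n
                     - inner ((\<Sum>i=1..n. gf i v) /\<^sub>R real n) (u - v)
                     \<ge> \<mu>f / 2 * (norm (u - v))\<^sup>2"
    and mu_psi: "mu_condition \<psi> \<mu>\<psi>"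
    and xs_min: "\<And>u. ereal ((\<Sum>i=1..n. f i xs) / n) + \<psi> xs
                      \<le> ereal ((\<Sum>i=1..n. f i u) / n) + \<psi> u"
    and xs_dom: "\<psi> xs \<noteq> \<infinity>"
    and K_ge: "K \<ge> 2"
    and x1_dom: "\<psi> (x 1) \<noteq> \<infinity>"
    and eta_pos: "\<And>k. k \<in> {1..K} \<Longrightarrow> \<eta> k > 0"
    and eta_le: "\<And>k. k \<in> {1..K} \<Longrightarrow>
        \<eta> k \<le> 1 / (2 * n * sqrt (((\<Sum>i=1..n. L i) / n) * Max (L ` {1..n})))"
    and perm: "\<And>k. k \<in> {1..K} \<Longrightarrow> \<sigma> k permutes {1..n}"
    and inner_start: "\<And>k. k \<in> {1..K} \<Longrightarrow> xin k 1 = x k"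
    and inner_step: "\<And>k i. k \<in> {1..K} \<Longrightarrow> i \<in> {1..n} \<Longrightarrow>
        xin k (i + 1) = xin k i - \<eta> k *\<^sub>R gf (\<sigma> k i) (xin k i)"
    and prox: "\<And>k z. k \<in> {1..K} \<Longrightarrow>
        ereal (real n) * \<psi> (x (k + 1)) + ereal (1 / (2 * \<eta> k) * (norm (x (k + 1) - xin k (n + 1)))\<^sup>2)
        \<le> ereal (real n) * \<psi> z + ereal (1 / (2 * \<eta> k) * (norm (z - xin k (n + 1)))\<^sup>2)"
  shows "\<forall>k \<in> {1..K}.
    (norm (x (k + 1) - xs))\<^sup>2 \<le>
      (norm (xs - x 1))\<^sup>2 / (\<Prod>s=1..k. 1 + n * \<eta> s * (\<mu>f + 2 * \<mu>\<psi>))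
      + (\<Sum>l=1..k. 8 * n * \<eta> l ^ 3
           * (\<Sum>i=2..n. L (\<sigma> l i) / n * (norm (\<Sum>j=1..i-1. gf (\<sigma> l j) xs))\<^sup>2)
           / (\<Prod>s=l..k. 1 + n * \<eta> s * (\<mu>f + 2 * \<mu>\<psi>)))"
proof -
  define N where "N = real n"
  have N: "N > 0" using n_pos by (simp add: N_def)
  define SL where "SL = (\<Sum>i=1..n. L i)"
  define Lm where "Lm = Max (L ` {1..n})"
  have Lm: "L i \<le> Lm" if "i \<in> {1..n}" for i unfolding Lm_def using that by (intro Max_ge) auto
  have SLpos: "SL > 0" unfolding SL_def using n_pos L_pos by (intro sum_pos) auto
  have SLle: "SL \<le> N * Lm"
  proof -
    have "SL \<le> (\<Sum>i=1..n. Lm)" unfolding SL_def by (rule sum_mono) (rule Lm)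
    then show ?thesis by (simp add: N_def)
  qed
  define Lb where "Lb = SL / N"
  have Lbpos: "Lb > 0" using SLpos N by (simp add: Lb_def)
  have LbLm: "Lb \<le> Lm" using SLle N by (simp add: Lb_def field_simps)
  define sq where "sq = sqrt (Lb * Lm)"
  have sqpos: "sq > 0" using Lbpos LbLm by (simp add: sq_def)
  have sq2: "sq^2 = Lb * Lm" using Lbpos LbLm by (simp add: sq_def)
  have Lbsq: "Lb \<le> sq"
  proof -
    have "Lb = sqrt (Lb * Lb)" using Lbpos by simp
    also have "\<dots> \<le> sq" unfolding sq_def using Lbpos LbLm by (intro real_sqrt_le_mono mult_left_mono) auto
    finally show ?thesis .
  qed
  have etaB: "2 * N * \<eta> k * sq \<le> 1" if k: "k \<in> {1..K}" for k
  proof -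
    have "\<eta> k \<le> 1 / (2 * N * sq)" using eta_le[OF k] by (simp add: N_def sq_def Lb_def SL_def Lm_def)
    then show ?thesis using N sqpos eta_pos[OF k] by (simp add: field_simps)
  qed
  have hA: "2 * \<eta> k * (\<Sum>i=1..n. L i) \<le> 1" if k: "k \<in> {1..K}" for k
  proof -
    have "2 * \<eta> k * (\<Sum>i=1..n. L i) = 2 * N * \<eta> k * Lb" using N by (simp add: Lb_def SL_def)
    also have "\<dots> \<le> 2 * N * \<eta> k * sq" using Lbsq N eta_pos[OF k] by (intro mult_left_mono) auto
    finally show ?thesis using etaB[OF k] by linarith
  qed
  have hB: "4 * \<eta> k ^ 2 * n * Lm * (\<Sum>i=1..n. L i) \<le> 1" if k: "k \<in> {1..K}" for k
  proof -
    have e1: "Lm * (\<Sum>i=1..n. L i) = sq^2 * N" using sq2 N by (simp add: Lb_def SL_def field_simps)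
    have "4 * \<eta> k ^ 2 * n * Lm * (\<Sum>i=1..n. L i) = 4 * \<eta> k ^ 2 * N * (Lm * (\<Sum>i=1..n. L i))"
      by (simp add: N_def mult_ac)
    also have "\<dots> = 4 * \<eta> k ^ 2 * N * (sq^2 * N)" by (simp only: e1)
    also have "\<dots> = (2 * N * \<eta> k * sq)^2" by (simp add: power2_eq_square mult_ac)
    also have "\<dots> \<le> 1^2" using etaB[OF k] N sqpos eta_pos[OF k] by (intro power_mono) auto
    finally show ?thesis by simp
  qed
  have dsc: "(\<Sum>i=1..n. f i (xs + d)) / n \<le> (\<Sum>i=1..n. f i xs) / n
            + inner ((\<Sum>i=1..n. gf i xs) /\<^sub>R real n) d + SL / (2 * N) * (norm d)\<^sup>2" for d
  proof -
    have "(\<Sum>i=1..n. f i (xs + d)) \<le> (\<Sum>i=1..n. f i xs + inner (gf i xs) d + L i / 2 * (norm d)\<^sup>2)"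
    proof (rule sum_mono)
      fix i assume i: "i \<in> {1..n}"
      have gd: "\<And>z. GDERIV (f i) z :> gf i z" using grad_f i by blast
      have lp: "\<And>u w. norm (gf i u - gf i w) \<le> L i * norm (u - w)" using smooth i by blast
      show "f i (xs + d) \<le> f i xs + inner (gf i xs) d + L i / 2 * (norm d)\<^sup>2"
        by (rule descent2(1)[OF gd lp])
    qed
    also have "\<dots> = (\<Sum>i=1..n. f i xs) + inner (\<Sum>i=1..n. gf i xs) d + SL / 2 * (norm d)\<^sup>2"
    proof -
      have e1: "(\<Sum>i=1..n. f i xs + inner (gf i xs) d + L i / 2 * (norm d)\<^sup>2)
          = (\<Sum>i=1..n. f i xs) + (\<Sum>i=1..n. inner (gf i xs) d) + (\<Sum>i=1..n. L i / 2 * (norm d)\<^sup>2)"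
        by (simp only: sum.distrib)
      have e2: "(\<Sum>i=1..n. inner (gf i xs) d) = inner (\<Sum>i=1..n. gf i xs) d"
        by (rule inner_sum_left[symmetric])
      have e3: "(\<Sum>i=1..n. L i / 2 * (norm d)\<^sup>2) = SL / 2 * (norm d)\<^sup>2"
        unfolding SL_def by (simp only: sum_distrib_right[symmetric] sum_divide_distrib[symmetric])
      show ?thesis unfolding e1 e2 e3 ..
    qed
    finally have "(\<Sum>i=1..n. f i (xs + d)) \<le> (\<Sum>i=1..n. f i xs) + inner (\<Sum>i=1..n. gf i xs) d + SL / 2 * (norm d)\<^sup>2" .
    then have "(\<Sum>i=1..n. f i (xs + d)) / N \<le> ((\<Sum>i=1..n. f i xs) + inner (\<Sum>i=1..n. gf i xs) d + SL / 2 * (norm d)\<^sup>2) / N"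
      using N by (intro divide_right_mono) auto
    also have "\<dots> = (\<Sum>i=1..n. f i xs) / N + inner ((\<Sum>i=1..n. gf i xs) /\<^sub>R N) d + SL / (2 * N) * (norm d)\<^sup>2"
    proof -
      have i1: "inner ((\<Sum>i=1..n. gf i xs) /\<^sub>R N) d = inner (\<Sum>i=1..n. gf i xs) d / N"
        by (simp add: divide_inverse_commute)
      have i2: "SL / 2 * (norm d)\<^sup>2 / N = SL / (2 * N) * (norm d)\<^sup>2" by simp
      show ?thesis unfolding i1 i2[symmetric] by (simp only: add_divide_distrib)
    qed
    finally show ?thesis by (simp add: N_def)
  qed
  have Mnn: "SL / (2 * N) \<ge> 0" using SLpos N by simp
  have sgs: "subgrad \<psi> xs (- ((\<Sum>i=1..n. gf i xs) /\<^sub>R real n))"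
    by (rule opt_subgrad[of \<psi> xs "\<lambda>u. (\<Sum>i=1..n. f i u) / n" "(\<Sum>i=1..n. gf i xs) /\<^sub>R real n" "SL / (2 * N)",
          OF psi_proper psi_convex xs_dom xs_min dsc Mnn])
  define q where "q s = 1 + n * \<eta> s * (\<mu>f + 2 * \<mu>\<psi>)" for s
  define a where "a j = (norm (x j - xs))\<^sup>2" for j
  define c where "c l = 8 * n * \<eta> l ^ 3
           * (\<Sum>i=2..n. L (\<sigma> l i) / n * (norm (\<Sum>j=1..i-1. gf (\<sigma> l j) xs))\<^sup>2)" for l
  have mupsi: "\<mu>\<psi> \<ge> 0" using mu_psi by (simp add: mu_condition_def)
  have qpos: "q k > 0" if "1 \<le> k" "k \<le> K" for k
  proof -
    have "\<eta> k > 0" using eta_pos that by auto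
    then have "n * \<eta> k * (\<mu>f + 2 * \<mu>\<psi>) \<ge> 0" using mu_f mupsi by simp
    then show ?thesis by (simp add: q_def)
  qed
  have stp: "q k * a (k + 1) \<le> a k + c k" if "1 \<le> k" "k \<le> K" for k
  proof -
    have k: "k \<in> {1..K}" using that by simp
    show ?thesis unfolding q_def a_def c_def of_nat_mult of_nat_numeral
      apply (rule epoch[where p="xin k" and xk="x k" and xp="x (k+1)" and \<sigma>="\<sigma> k" and \<eta>="\<eta> k"
            and Lm=Lm and n=n and f=f and gf=gf and L=L and \<psi>=\<psi> and xs=xs and \<mu>f=\<mu>f and \<mu>\<psi>=\<mu>\<psi>])
      apply (assumption | rule n_pos conv_f grad_f L_pos smooth psi_proper psi_convex f_strong mu_psi sgs
          eta_pos[OF k] hA[OF k] hB[OF k] Lm perm[OF k] inner_start[OF k] inner_step[OF k] prox[OF k])+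
      done
  qed
  show ?thesis
  proof
    fix k assume k: "k \<in> {1..K}"
    have "a (k + 1) \<le> a 1 / (\<Prod>s=1..k. q s) + (\<Sum>l=1..k. c l / (\<Prod>s=l..k. q s))"
      by (rule unroll[where a=a and c=c and q=q and K=K, OF stp qpos]) (use k in auto)
    then show "(norm (x (k + 1) - xs))\<^sup>2 \<le>
      (norm (xs - x 1))\<^sup>2 / (\<Prod>s=1..k. 1 + n * \<eta> s * (\<mu>f + 2 * \<mu>\<psi>))
      + (\<Sum>l=1..k. 8 * n * \<eta> l ^ 3
           * (\<Sum>i=2..n. L (\<sigma> l i) / n * (norm (\<Sum>j=1..i-1. gf (\<sigma> l j) xs))\<^sup>2)
           / (\<Prod>s=l..k. 1 + n * \<eta> s * (\<mu>f + 2 * \<mu>\<psi>)))"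
      by (simp add: a_def c_def q_def norm_minus_commute)
  qed
qed


end
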